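(* Consider online caching with catalogue size $N$, cache capacity $C<N/2$, batch size $B$ and horizon $T$. Suppose that at each slot $t$ the system samples $l<B$ requests uniformly at random from the batch of $B$ requests (independently across slots and of the algorithm's perturbations), lets $\hat d_t\in\mathbb{N}^N$ be the vector counting, for each file, the number of sampled requests for that file, and uses the estimator $\hat r_t=\frac{B}{l}\hat d_t$ (which satisfies $\mathbb{E}[\hat r_t]=r_t$). Then NFPL with $\eta=B\sqrt{T/(2C)}$ satisfies $$\bar{\mathcal{R}}_T(\mathrm{NFPL})\le 2\sqrt{2}\,B\sqrt{C\,T}.$$
   Context: Online caching setting: files are indexed by $\{1,\dots,N\}$. At each time slot $t=1,\dots,T$ a batch of $B$ requests arrives, summarized by $r_t\in\mathbb{N}^N$ with $r_{t,i}$ the number of requests for file $i$ and $\sum_i r_{t,i}=B$; the sequence $r_1,\dots,r_T$ is fixed in advance (oblivious). The decision set is the capped simplex $\mathcal{X}=\{x\in[0,1]^N:\sum_{i=1}^N x_i=C\}$ and the cost of decision $x$ at slot $t$ is $\langle r_t,x\rangle$. For $s\in\mathbb{R}^N$, $M(s)\in\arg\min_{x\in\mathcal{X}}\langle s,x\rangle$. The NFPL algorithm with parameter $\eta$: at each slot $t$ draw $\gamma_t$ uniformly from $[0,\eta]^N$ (independently), play $x_t=M\big(\sum_{s<t}\hat r_s+\gamma_t\big)$, then observe $\hat r_t$. The (weak/pseudo) regret is $\bar{\mathcal{R}}_T=\mathbb{E}\big[\sum_{t=1}^T\langle r_t,x_t\rangle\big]-\min_{x\in\mathcal{X}}\sum_{t=1}^T\langle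 r_t,x\rangle$, expectation over all the algorithm's randomness, including the sampling. *)

theory Defs
  imports "HOL-Probability.Probability"
begin

text \<open>Files are indexed by a finite type 'n, so N = CARD('n); vectors in R^N are real^'n.
  A request sequence is given by req t j :: 'n, the file requested by the j-th request
  (j < B) of the batch at slot t.\<close>

definition req_count :: "(nat \<Rightarrow> nat \<Rightarrow> 'n::finite) \<Rightarrow> nat \<Rightarrow> nat \<Rightarrow> real^'n" where
  "req_count req B t = (\<chi> i. real (card {j. j < B \<and> req t j = i}))"

definition capped_simplex :: "nat \<Rightarrow> (real^'n::finite) set" where
  "capped_simplex C = {x. (\<forall>i. 0 \<le> x $ i \<and> x $ i \<le> 1) \<and> (\<Sum>i\<in>UNIV. x $ i) = real C}"

definition is_min_oracle :: "nat \<Rightarrow> (real^'n::finite \<Rightarrow> real^'n) \<Rightarrow> bool" where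
  "is_min_oracle C M \<longleftrightarrow>
     (\<forall>s. M s \<in> capped_simplex C \<and> (\<forall>y\<in>capped_simplex C. s \<bullet> M s \<le> s \<bullet> y))"

definition sample_pmf :: "nat \<Rightarrow> nat \<Rightarrow> nat set pmf" where
  "sample_pmf B l = pmf_of_set {S. S \<subseteq> {..<B} \<and> card S = l}"

definition rhat :: "(nat \<Rightarrow> nat \<Rightarrow> 'n::finite) \<Rightarrow> nat \<Rightarrow> nat \<Rightarrow> nat \<Rightarrow> nat set \<Rightarrow> real^'n" where
  "rhat req B l t S = (\<chi> i. (real B / real l) * real (card {j\<in>S. req t j = i}))"

definition slot_measure :: "nat \<Rightarrow> nat \<Rightarrow> real \<Rightarrow> (nat set \<times> (real^'n::finite)) measure" where
  "slot_measure B l \<eta> =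
     measure_pmf (sample_pmf B l) \<Otimes>\<^sub>M uniform_measure lborel (cbox 0 (\<chi> i. \<eta>))"

definition nfpl_space :: "nat \<Rightarrow> nat \<Rightarrow> real \<Rightarrow> nat \<Rightarrow> (nat \<Rightarrow> nat set \<times> (real^'n::finite)) measure" where
  "nfpl_space B l \<eta> T = PiM {1..T} (\<lambda>t. slot_measure B l \<eta>)"

definition nfpl_decision ::
  "(real^'n::finite \<Rightarrow> real^'n) \<Rightarrow> (nat \<Rightarrow> nat \<Rightarrow> 'n) \<Rightarrow> nat \<Rightarrow> nat \<Rightarrow> nat
     \<Rightarrow> (nat \<Rightarrow> nat set \<times> (real^'n)) \<Rightarrow> real^'n" where
  "nfpl_decision M req B l t \<omega> =
     M ((\<Sum>s\<in>{1..<t}. rhat req B l s (fst (\<omega> s))) + snd (\<omega> t))"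

definition nfpl_regret ::
  "nat \<Rightarrow> (real^'n::finite \<Rightarrow> real^'n) \<Rightarrow> (nat \<Rightarrow> nat \<Rightarrow> 'n) \<Rightarrow> nat \<Rightarrow> nat \<Rightarrow> real \<Rightarrow> nat \<Rightarrow> real" where
  "nfpl_regret C M req B l \<eta> T =
     (\<integral>\<omega>. (\<Sum>t\<in>{1..T}. req_count req B t \<bullet> nfpl_decision M req B l t \<omega>) \<partial>nfpl_space B l \<eta> T)
     - (INF x\<in>capped_simplex C. \<Sum>t\<in>{1..T}. req_count req B t \<bullet> x)"

end

theory Submission
  imports Defs
begin


definition mm :: "(real^'n::finite \<Rightarrow> real^'n) \<Rightarrow> real^'n \<Rightarrow> real" where
  "mm M s = s \<bullet> M s"

lemma simplex_bounds:
  assumes "x \<in> capped_simplex C"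
  shows "0 \<le> x $ i" "x $ i \<le> 1" "(\<Sum>i\<in>UNIV. x $ i) = real C"
  using assms by (auto simp: capped_simplex_def)

lemma inner_simplex_nonneg:
  assumes "x \<in> capped_simplex C" "\<And>i. 0 \<le> w $ i"
  shows "0 \<le> w \<bullet> x"
  unfolding inner_vec_def using assms
  by (auto intro!: sum_nonneg simp: capped_simplex_def)

lemma inner_simplex_le:
  assumes "x \<in> capped_simplex C" "\<And>i. 0 \<le> w $ i"
  shows "w \<bullet> x \<le> (\<Sum>i\<in>UNIV. w $ i)"
  unfolding inner_vec_def using assms
  by (auto intro!: sum_mono mult_left_le simp: capped_simplex_def)

lemma abs_inner_simplex_le:
  assumes "x \<in> capped_simplex C"
  shows "\<bar>s \<bullet> x\<bar> \<le> (\<Sum>i\<in>UNIV. \<bar>s $ i\<bar>)"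
proof -
  have "\<bar>s \<bullet> x\<bar> \<le> (\<Sum>i\<in>UNIV. \<bar>s $ i * x $ i\<bar>)"
    unfolding inner_vec_def by (simp add: sum_abs)
  also have "\<dots> \<le> (\<Sum>i\<in>UNIV. \<bar>s $ i\<bar>)"
    using assms by (auto intro!: sum_mono simp: abs_mult capped_simplex_def mult_left_le)
  finally show ?thesis .
qed

lemma mm_le:
  assumes "is_min_oracle C M" "y \<in> capped_simplex C"
  shows "mm M s \<le> s \<bullet> y"
  using assms by (auto simp: is_min_oracle_def mm_def)

lemma M_in: "is_min_oracle C M \<Longrightarrow> M s \<in> capped_simplex C"
  by (auto simp: is_min_oracle_def)

lemma mm_mono:
  assumes "is_min_oracle C M" "\<And>i. 0 \<le> w $ i"
  shows "mm M s \<le> mm M (s + w)"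
proof -
  have "mm M s \<le> s \<bullet> M (s + w)" by (rule mm_le[OF assms(1) M_in[OF assms(1)]])
  also have "\<dots> \<le> s \<bullet> M (s + w) + w \<bullet> M (s + w)"
    using inner_simplex_nonneg[OF M_in[OF assms(1)] assms(2)] by simp
  also have "\<dots> = mm M (s + w)" by (simp add: mm_def inner_add_left)
  finally show ?thesis .
qed

lemma mm_step:
  assumes "is_min_oracle C M"
  shows "w \<bullet> M (s + w) \<le> mm M (s + w) - mm M s"
proof -
  have "mm M s \<le> s \<bullet> M (s + w)" by (rule mm_le[OF assms(1) M_in[OF assms(1)]])
  then show ?thesis by (simp add: mm_def inner_add_left)
qed



definition Qc :: "real \<Rightarrow> (real^'n::finite) set" where
  "Qc \<eta> = cbox 0 (\<chi> i. \<eta>)"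

definition Um :: "real \<Rightarrow> (real^'n::finite) measure" where
  "Um \<eta> = uniform_measure lborel (Qc \<eta>)"

lemma Qc_sets: "Qc \<eta> \<in> sets lborel"
  by (simp add: Qc_def)

lemma cbox_fin[simp]: "emeasure lborel (cbox (a::'a::euclidean_space) b) < \<top>"
  using emeasure_lborel_cbox_finite[of a b] by simp

lemma Qc_borel[measurable]: "Qc \<eta> \<in> sets borel"
  by (simp add: Qc_def)

lemma one_div_ennreal: "0 < c \<Longrightarrow> 1 / ennreal c = ennreal (1 / c)"
  by (metis divide_ennreal ennreal_1 zero_le_one)

lemma measure_cbox0:
  fixes b :: "real^'n::finite"
  assumes "\<And>i. 0 \<le> b $ i"
  shows "measure lborel (cbox 0 b) = (\<Prod>i\<in>UNIV. b $ i)"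
proof -
  have "0 \<in> cbox 0 b" using assms by (simp add: mem_box_cart)
  then have "cbox 0 b \<noteq> {}" by blast
  then show ?thesis by (simp add: content_cbox_if_cart)
qed

lemma measure_Qc:
  assumes "0 \<le> \<eta>"
  shows "measure lborel (Qc \<eta> :: (real^'n::finite) set) = \<eta> ^ CARD('n)"
  using assms by (simp add: Qc_def measure_cbox0)

lemma emeasure_Qc:
  assumes "0 \<le> \<eta>"
  shows "emeasure lborel (Qc \<eta> :: (real^'n::finite) set) = ennreal (\<eta> ^ CARD('n))"
proof -
  have "emeasure lborel (Qc \<eta> :: (real^'n::finite) set) = ennreal (measure lborel (Qc \<eta> :: (real^'n::finite) set))"
    using emeasure_lborel_cbox_finite[of "0::real^'n" "\<chi> i. \<eta>"]
    by (intro emeasure_eq_ennreal_measure) (auto simp: Qc_def less_top)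
  then show ?thesis using measure_Qc[OF assms, where 'n='n] by simp
qed

lemma prob_Um:
  assumes "0 < \<eta>"
  shows "prob_space (Um \<eta> :: (real^'n::finite) measure)"
  unfolding Um_def using assms
  by (intro prob_space_uniform_measure) (auto simp: emeasure_Qc)

lemma sets_Um[simp, measurable_cong]: "sets (Um \<eta>) = sets borel"
  by (simp add: Um_def)

lemma space_Um[simp]: "space (Um \<eta>) = UNIV"
  by (simp add: Um_def)

lemma AE_Um: "AE x in Um \<eta>. x \<in> Qc \<eta>"
  unfolding Um_def by (rule AE_uniform_measureI) auto

lemma Um_density:
  assumes "0 < \<eta>"
  shows "(Um \<eta> :: (real^'n::finite) measure) =
    density lborel (\<lambda>x. ennreal (indicator (Qc \<eta>) x / \<eta> ^ CARD('n)))"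
  unfolding Um_def uniform_measure_def
proof (intro arg_cong[where f="density lborel"] ext)
  fix x :: "real^'n"
  have "0 < \<eta> ^ CARD('n)" using assms by simp
  then show "indicator (Qc \<eta>) x / emeasure lborel (Qc \<eta> :: (real^'n) set) = ennreal (indicator (Qc \<eta>) x / \<eta> ^ CARD('n))"
    using assms by (cases "x \<in> Qc \<eta>") (simp_all add: emeasure_Qc one_div_ennreal)
qed

lemma integral_Um:
  fixes g :: "real^'n::finite \<Rightarrow> real"
  assumes "0 < \<eta>" and g[measurable]: "g \<in> borel_measurable borel"
  shows "integral\<^sup>L (Um \<eta>) g = (\<integral>x. indicator (Qc \<eta>) x * g x \<partial>lborel) / \<eta> ^ CARD('n::finite)"
proof -
  have "integral\<^sup>L (Um \<eta>) g = (\<integral>x. (indicator (Qc \<eta>) x / \<eta> ^ CARD('n)) *\<^sub>R g x \<partial>lborel)"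
    unfolding Um_density[OF assms(1)]
    using assms by (intro integral_density) (auto simp: measurable_cong_sets[OF sets_lborel refl])
  also have "\<dots> = (\<integral>x. indicator (Qc \<eta>) x * g x \<partial>lborel) / \<eta> ^ CARD('n::finite)"
    unfolding real_scaleR_def by (subst integral_divide_zero[symmetric]) (auto intro!: integral_cong)
  finally show ?thesis .
qed



lemma measure_slab:
  fixes v :: "real^'n::finite"
  assumes "0 \<le> v $ i" "0 \<le> \<eta>"
  shows "measure lborel (cbox 0 (\<chi> j. if j = i then v $ i else \<eta>) :: (real^'n) set)
         = v $ i * \<eta> ^ (CARD('n) - 1)"
proof -
  have "measure lborel (cbox 0 (\<chi> j. if j = i then v $ i else \<eta>) :: (real^'n) set)
     = (\<Prod>j\<in>UNIV. if j = i then v $ i else \<eta>)"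
    using assms by (subst measure_cbox0) auto
  also have "\<dots> = v $ i * (\<Prod>j\<in>UNIV - {i}. if j = i then v $ i else \<eta>)"
    by (subst prod.remove[of _ i]) auto
  also have "(\<Prod>j\<in>UNIV - {i}. if j = i then v $ i else \<eta>) = (\<Prod>j\<in>UNIV - {i}. \<eta>)"
    by (rule prod.cong) auto
  also have "\<dots> = \<eta> ^ (CARD('n) - 1)"
    by (simp add: card_Diff_singleton)
  finally show ?thesis .
qed

lemma shift_pointwise:
  fixes x v :: "real^'n::finite" and gx K :: real
  assumes g0: "0 \<le> gx" and gK: "gx \<le> K" and v0: "\<And>i. 0 \<le> v $ i" and "0 \<le> \<eta>"
  shows "indicator (Qc \<eta>) x * gx - indicator (Qc \<eta>) (x - v) * gx
     \<le> K * (\<Sum>i\<in>UNIV. indicator (cbox 0 (\<chi> j. if j = i then v $ i else \<eta>)) x)"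
proof (cases "x \<in> Qc \<eta> \<and> x - v \<notin> Qc \<eta>")
  case True
  then obtain i where i: "\<not> (0 \<le> (x - v) $ i \<and> (x - v) $ i \<le> \<eta>)"
    by (auto simp: Qc_def mem_box_cart)
  have xQ: "\<And>j. 0 \<le> x $ j \<and> x $ j \<le> \<eta>" using True by (auto simp: Qc_def mem_box_cart)
  have "x $ i < v $ i" using i xQ[of i] v0[of i] by auto
  then have "x \<in> cbox 0 (\<chi> j. if j = i then v $ i else \<eta>)"
    using xQ by (auto simp: mem_box_cart less_imp_le)
  then have "1 \<le> (\<Sum>i\<in>UNIV. indicator (cbox 0 (\<chi> j. if j = i then v $ i else \<eta>)) x :: real)"
    using member_le_sum[of i UNIV "\<lambda>i. indicator (cbox 0 (\<chi> j. if j = i then v $ i else \<eta>)) x :: real"]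
    by auto
  then have "K * 1 \<le> K * (\<Sum>i\<in>UNIV. indicator (cbox 0 (\<chi> j. if j = i then v $ i else \<eta>)) x)"
    using g0 gK by (intro mult_left_mono) auto
  then show ?thesis using True gK by auto
next
  case False
  have "0 \<le> K * (\<Sum>i\<in>UNIV. indicator (cbox 0 (\<chi> j. if j = i then v $ i else \<eta>)) x :: real)"
    using g0 gK by (intro mult_nonneg_nonneg sum_nonneg) auto
  moreover have "indicator (Qc \<eta>) x * gx - indicator (Qc \<eta>) (x - v) * gx \<le> 0"
    using False g0 by (auto simp: indicator_def)
  ultimately show ?thesis by linarith
qed

lemma shift_Um:
  fixes g :: "real^'n::finite \<Rightarrow> real" and v :: "real^'n"
  assumes eta: "0 < \<eta>" and g[measurable]: "g \<in> borel_measurable borel"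
    and g0: "\<And>x. 0 \<le> g x" and gK: "\<And>x. g x \<le> K" and v0: "\<And>i. 0 \<le> v $ i"
  shows "integral\<^sup>L (Um \<eta>) g - (\<integral>x. g (x + v) \<partial>Um \<eta>) \<le> K * (\<Sum>i\<in>UNIV. v $ i) / \<eta>"
proof -
  define c where "c = \<eta> ^ CARD('n)"
  define A where "A i = (cbox 0 (\<chi> j. if j = i then v $ i else \<eta>) :: (real^'n) set)" for i
  have K0: "0 \<le> K" using g0[of 0] gK[of 0] by linarith
  have c0: "0 < c" using eta by (simp add: c_def)
  have i0: "integrable lborel (\<lambda>x::real^'n. K * indicator (Qc \<eta>) x :: real)"
    using emeasure_lborel_cbox_finite by (intro integrable_mult_right integrable_real_indicator) (auto simp: Qc_def)
  have int1: "integrable lborel (\<lambda>x. indicator (Qc \<eta>) x * g x)"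
  proof (rule Bochner_Integration.integrable_bound[OF i0])
    show "(\<lambda>x. indicator (Qc \<eta>) x * g x) \<in> borel_measurable lborel" by measurable
    show "AE x in lborel. norm (indicator (Qc \<eta>) x * g x) \<le> norm (K * indicator (Qc \<eta>) x :: real)"
      using g0 gK K0 by (intro AE_I2) (auto simp: indicator_def)
  qed
  have i0': "integrable lborel (\<lambda>x::real^'n. K * indicator (cbox v (\<chi> i. v $ i + \<eta>)) x :: real)"
    using emeasure_lborel_cbox_finite by (intro integrable_mult_right integrable_real_indicator) auto
  have int2: "integrable lborel (\<lambda>x. indicator (Qc \<eta>) (x - v) * g x)"
  proof (rule Bochner_Integration.integrable_bound[OF i0'])
    show "(\<lambda>x. indicator (Qc \<eta>) (x - v) * g x) \<in> borel_measurable lborel" by measurable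
    have "x \<in> cbox v (\<chi> i. v $ i + \<eta>)" if xv: "x - v \<in> Qc \<eta>" for x
    proof -
      have h: "\<And>i. 0 \<le> x$i - v$i \<and> x$i - v$i \<le> \<eta>" using xv by (simp add: Qc_def mem_box_cart)
      show ?thesis unfolding mem_box_cart vec_lambda_beta
      proof
        fix i show "v$i \<le> x$i \<and> x$i \<le> v$i + \<eta>" using h[of i] by linarith
      qed
    qed
    then show "AE x in lborel. norm (indicator (Qc \<eta>) (x - v) * g x) \<le> norm (K * indicator (cbox v (\<chi> i. v $ i + \<eta>)) x :: real)"
      using g0 gK K0 by (intro AE_I2) (auto simp: indicator_def)
  qed
  have int3: "integrable lborel (\<lambda>x. K * (\<Sum>i\<in>UNIV. indicator (A i) x) :: real)"
  proof -
    have "integrable lborel (\<lambda>x. (\<Sum>i\<in>UNIV. indicator (A i) x) :: real)"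
      by (intro Bochner_Integration.integrable_sum integrable_real_indicator) (auto simp: A_def emeasure_lborel_cbox_finite)
    then show ?thesis by simp
  qed
  have e1: "integral\<^sup>L (Um \<eta>) g = (\<integral>x. indicator (Qc \<eta>) x * g x \<partial>lborel) / c"
    unfolding c_def by (rule integral_Um[OF eta g])
  have "(\<integral>x. g (x + v) \<partial>Um \<eta>) = (\<integral>x. indicator (Qc \<eta>) x * g (x + v) \<partial>lborel) / c"
    unfolding c_def by (rule integral_Um[OF eta]) measurable
  also have "(\<integral>x. indicator (Qc \<eta>) x * g (x + v) \<partial>lborel)
      = (\<integral>x. indicator (Qc \<eta>) (x - v) * g x \<partial>lborel)"
  proof -
    have "(\<integral>x. indicator (Qc \<eta>) (x - v) * g x \<partial>lborel)
        = (\<integral>x. indicator (Qc \<eta>) (x - v) * g x \<partial>distr lborel borel ((+) v))"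
      by (simp add: lborel_distr_plus)
    also have "\<dots> = (\<integral>x. indicator (Qc \<eta>) (v + x - v) * g (v + x) \<partial>lborel)"
      by (rule integral_distr) measurable
    finally show ?thesis by (simp add: add.commute)
  qed
  finally have e2: "(\<integral>x. g (x + v) \<partial>Um \<eta>) = (\<integral>x. indicator (Qc \<eta>) (x - v) * g x \<partial>lborel) / c" .
  have "(\<integral>x. indicator (Qc \<eta>) x * g x \<partial>lborel) - (\<integral>x. indicator (Qc \<eta>) (x - v) * g x \<partial>lborel)
      = (\<integral>x. indicator (Qc \<eta>) x * g x - indicator (Qc \<eta>) (x - v) * g x \<partial>lborel)"
    using int1 int2 by (rule Bochner_Integration.integral_diff[symmetric])
  also have "\<dots> \<le> (\<integral>x. K * (\<Sum>i\<in>UNIV. indicator (A i) x) \<partial>lborel)"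
    using int1 int2 int3 eta
    by (intro Bochner_Integration.integral_mono) (auto simp: A_def intro!: shift_pointwise g0 gK v0)
  also have "\<dots> = K * (\<Sum>i\<in>UNIV. measure lborel (A i))"
    using emeasure_lborel_cbox_finite
    by (simp add: Bochner_Integration.integral_sum integrable_real_indicator A_def)
  also have "\<dots> = K * (\<Sum>i\<in>UNIV. v $ i) * \<eta> ^ (CARD('n) - 1)"
    using eta v0 by (simp add: A_def measure_slab sum_distrib_right)
  finally have main: "(\<integral>x. indicator (Qc \<eta>) x * g x \<partial>lborel) - (\<integral>x. indicator (Qc \<eta>) (x - v) * g x \<partial>lborel)
     \<le> K * (\<Sum>i\<in>UNIV. v $ i) * \<eta> ^ (CARD('n) - 1)" .
  have cc: "c = \<eta> * \<eta> ^ (CARD('n) - 1)"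
  proof -
    have n1: "Suc (CARD('n) - 1) = CARD('n)" by simp
    show ?thesis unfolding c_def power_Suc[symmetric] n1 ..
  qed
  have "integral\<^sup>L (Um \<eta>) g - (\<integral>x. g (x + v) \<partial>Um \<eta>)
     = ((\<integral>x. indicator (Qc \<eta>) x * g x \<partial>lborel) - (\<integral>x. indicator (Qc \<eta>) (x - v) * g x \<partial>lborel)) / c"
    using e1 e2 by (simp add: diff_divide_distrib)
  also have "\<dots> \<le> K * (\<Sum>i\<in>UNIV. v $ i) * \<eta> ^ (CARD('n) - 1) / c"
    using main c0 by (intro divide_right_mono) auto
  also have "\<dots> = K * (\<Sum>i\<in>UNIV. v $ i) / \<eta>"
    using eta unfolding cc by (simp add: field_simps)
  finally show ?thesis .
qed



definition Phi :: "(real^'n::finite \<Rightarrow> real^'n) \<Rightarrow> real \<Rightarrow> real^'n \<Rightarrow> real" where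
  "Phi M \<eta> R = (\<integral>\<gamma>. mm M (R + \<gamma>) \<partial>Um \<eta>)"

lemma mm_measurable[measurable]:
  assumes [measurable]: "M \<in> borel_measurable borel"
  shows "mm M \<in> borel_measurable borel"
  unfolding mm_def by measurable

lemma integrable_Um_bound:
  fixes f :: "real^'n::finite \<Rightarrow> real"
  assumes "0 < \<eta>" "f \<in> borel_measurable borel" "\<And>x. x \<in> Qc \<eta> \<Longrightarrow> \<bar>f x\<bar> \<le> K"
  shows "integrable (Um \<eta>) f"
proof -
  interpret U: prob_space "Um \<eta> :: (real^'n) measure" using prob_Um[OF assms(1)] .
  show ?thesis
  proof (rule U.integrable_const_bound)
    show "AE x in Um \<eta>. norm (f x) \<le> K"
      using AE_Um[of \<eta>] by eventually_elim (use assms(3) in auto)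
    show "f \<in> borel_measurable (Um \<eta>)" using assms(2) by simp
  qed
qed

lemma integrable_mm:
  fixes R :: "real^'n::finite"
  assumes orc: "is_min_oracle C M" and Mm[measurable]: "M \<in> borel_measurable borel" and eta: "0 < \<eta>"
  shows "integrable (Um \<eta>) (\<lambda>\<gamma>. mm M (R + \<gamma>))"
proof (rule integrable_Um_bound[OF eta])
  show "(\<lambda>\<gamma>. mm M (R + \<gamma>)) \<in> borel_measurable borel" by measurable
  fix x :: "real^'n" assume x: "x \<in> Qc \<eta>"
  have "\<bar>mm M (R + x)\<bar> \<le> (\<Sum>i\<in>UNIV. \<bar>(R + x) $ i\<bar>)"
    unfolding mm_def by (rule abs_inner_simplex_le[OF M_in[OF orc]])
  also have "\<dots> \<le> (\<Sum>i\<in>UNIV. \<bar>R $ i\<bar> + \<eta>)"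
  proof (rule sum_mono)
    fix i
    have "0 \<le> x $ i \<and> x $ i \<le> \<eta>" using x by (auto simp: Qc_def mem_box_cart)
    then show "\<bar>(R + x) $ i\<bar> \<le> \<bar>R $ i\<bar> + \<eta>" by auto
  qed
  finally show "\<bar>mm M (R + x)\<bar> \<le> (\<Sum>i\<in>UNIV. \<bar>R $ i\<bar> + \<eta>)" .
qed

lemma Phi_mono:
  fixes R w :: "real^'n::finite"
  assumes orc: "is_min_oracle C M" and Mm[measurable]: "M \<in> borel_measurable borel" and eta: "0 < \<eta>"
    and w0: "\<And>i. 0 \<le> w $ i"
  shows "Phi M \<eta> R \<le> Phi M \<eta> (R + w)"
  unfolding Phi_def
proof (rule Bochner_Integration.integral_mono)
  show "integrable (Um \<eta>) (\<lambda>\<gamma>. mm M (R + \<gamma>))" by (rule integrable_mm[OF orc Mm eta])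
  show "integrable (Um \<eta>) (\<lambda>\<gamma>. mm M (R + w + \<gamma>))" by (rule integrable_mm[OF orc Mm eta])
  fix x
  have "mm M (R + x) \<le> mm M (R + x + w)" by (rule mm_mono[OF orc w0])
  then show "mm M (R + x) \<le> mm M (R + w + x)" by (simp add: ac_simps)
qed

lemma core:
  fixes R w :: "real^'n::finite"
  assumes orc: "is_min_oracle C M" and Mm[measurable]: "M \<in> borel_measurable borel" and eta: "0 < \<eta>"
    and w0: "\<And>i. 0 \<le> w $ i"
  shows "(\<integral>\<gamma>. w \<bullet> M (R + \<gamma>) \<partial>Um \<eta>)
     \<le> Phi M \<eta> (R + w) - Phi M \<eta> R + (\<Sum>i\<in>UNIV. w $ i) * (\<Sum>i\<in>UNIV. w $ i) / \<eta>"
proof -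
  define g where "g \<gamma> = w \<bullet> M (R + \<gamma>)" for \<gamma>
  have gm[measurable]: "g \<in> borel_measurable borel" unfolding g_def by measurable
  have g0: "0 \<le> g x" for x unfolding g_def by (rule inner_simplex_nonneg[OF M_in[OF orc] w0])
  have gK: "g x \<le> (\<Sum>i\<in>UNIV. w $ i)" for x unfolding g_def by (rule inner_simplex_le[OF M_in[OF orc] w0])
  have ig: "integrable (Um \<eta>) g"
    using g0 gK by (intro integrable_Um_bound[OF eta gm]) (auto simp: abs_of_nonneg)
  have ig': "integrable (Um \<eta>) (\<lambda>\<gamma>. g (\<gamma> + w))"
    using g0 gK by (intro integrable_Um_bound[OF eta]) (auto simp: abs_of_nonneg)
  have i1: "integrable (Um \<eta>) (\<lambda>\<gamma>. mm M (R + w + \<gamma>))" by (rule integrable_mm[OF orc Mm eta])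
  have i2: "integrable (Um \<eta>) (\<lambda>\<gamma>. mm M (R + \<gamma>))" by (rule integrable_mm[OF orc Mm eta])
  have pw: "g \<gamma> \<le> (g \<gamma> - g (\<gamma> + w)) + (mm M (R + w + \<gamma>) - mm M (R + \<gamma>))" for \<gamma>
  proof -
    have "w \<bullet> M (R + \<gamma> + w) \<le> mm M (R + \<gamma> + w) - mm M (R + \<gamma>)" by (rule mm_step[OF orc])
    then show ?thesis unfolding g_def by (simp add: ac_simps)
  qed
  have "integral\<^sup>L (Um \<eta>) g \<le> (\<integral>\<gamma>. (g \<gamma> - g (\<gamma> + w)) + (mm M (R + w + \<gamma>) - mm M (R + \<gamma>)) \<partial>Um \<eta>)"
    using ig ig' i1 i2 pw by (intro Bochner_Integration.integral_mono) auto
  also have "\<dots> = (integral\<^sup>L (Um \<eta>) g - (\<integral>\<gamma>. g (\<gamma> + w) \<partial>Um \<eta>)) + (Phi M \<eta> (R + w) - Phi M \<eta> R)"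
    unfolding Phi_def using ig ig' i1 i2
    by (simp add: Bochner_Integration.integral_add Bochner_Integration.integral_diff)
  also have "\<dots> \<le> (\<Sum>i\<in>UNIV. w $ i) * (\<Sum>i\<in>UNIV. w $ i) / \<eta> + (Phi M \<eta> (R + w) - Phi M \<eta> R)"
    using shift_Um[OF eta gm g0 gK w0] by linarith
  finally show ?thesis unfolding g_def by linarith
qed



definition Ssets :: "nat \<Rightarrow> nat \<Rightarrow> nat set set" where
  "Ssets B l = {S. S \<subseteq> {..<B} \<and> card S = l}"

lemma Ssets_finite: "finite (Ssets B l)"
  unfolding Ssets_def by (rule finite_subset[of _ "Pow {..<B}"]) auto

lemma Ssets_ne: "l \<le> B \<Longrightarrow> Ssets B l \<noteq> {}"
proof -
  assume "l \<le> B"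
  then have "{..<l} \<in> Ssets B l" by (auto simp: Ssets_def)
  then show ?thesis by blast
qed

lemma card_Ssets: "card (Ssets B l) = B choose l"
  unfolding Ssets_def using n_subsets[of "{..<B}" l] by simp

lemma card_filter_sum: "finite A \<Longrightarrow> card {x\<in>A. P x} = (\<Sum>x\<in>A. if P x then 1 else 0)"
  by (simp add: sum.inter_filter[symmetric])

lemma card_Ssets_mem:
  assumes "j < B" "0 < l"
  shows "card {S\<in>Ssets B l. j \<in> S} = (B - 1) choose (l - 1)"
proof -
  have "bij_betw (\<lambda>S. S - {j}) {S\<in>Ssets B l. j \<in> S} {S'. S' \<subseteq> {..<B} - {j} \<and> card S' = l - 1}"
  proof (rule bij_betw_byWitness[where f'="insert j"])
    show "\<forall>a\<in>{S \<in> Ssets B l. j \<in> S}. insert j (a - {j}) = a" by auto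
    show "\<forall>a'\<in>{S'. S' \<subseteq> {..<B} - {j} \<and> card S' = l - 1}. insert j a' - {j} = a'" by auto
    show "(\<lambda>S. S - {j}) ` {S \<in> Ssets B l. j \<in> S} \<subseteq> {S'. S' \<subseteq> {..<B} - {j} \<and> card S' = l - 1}"
    proof (rule image_subsetI)
      fix S assume "S \<in> {S \<in> Ssets B l. j \<in> S}"
      then have "S \<subseteq> {..<B}" "card S = l" "finite S" "j \<in> S" by (auto simp: Ssets_def finite_subset)
      then show "S - {j} \<in> {S'. S' \<subseteq> {..<B} - {j} \<and> card S' = l - 1}"
        by (auto simp: card_Diff_singleton)
    qed
    show "insert j ` {S'. S' \<subseteq> {..<B} - {j} \<and> card S' = l - 1} \<subseteq> {S \<in> Ssets B l. j \<in> S}"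
    proof safe
      fix S' assume S': "S' \<subseteq> {..<B} - {j}" "card S' = l - 1"
      then have "finite S'" by (meson finite_Diff finite_lessThan finite_subset)
      moreover have "j \<notin> S'" using S' by auto
      ultimately have "card (insert j S') = l" using S' assms by simp
      then show "insert j S' \<in> Ssets B l" using S' assms by (auto simp: Ssets_def)
    qed
  qed
  then have "card {S\<in>Ssets B l. j \<in> S} = card {S'. S' \<subseteq> {..<B} - {j} \<and> card S' = l - 1}"
    by (rule bij_betw_same_card)
  also have "\<dots> = card ({..<B} - {j}) choose (l - 1)" by (rule n_subsets) simp
  also have "\<dots> = (B - 1) choose (l - 1)" using assms by simp
  finally show ?thesis .
qed

lemma sum_card_filter:
  assumes "0 < l"
  shows "(\<Sum>S\<in>Ssets B l. card {j\<in>S. P j}) = card {j\<in>{..<B}. P j} * ((B - 1) choose (l - 1))"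
proof -
  have "(\<Sum>S\<in>Ssets B l. card {j\<in>S. P j}) = (\<Sum>S\<in>Ssets B l. \<Sum>j\<in>{..<B}. if j \<in> S \<and> P j then 1 else 0)"
  proof (rule sum.cong[OF refl])
    fix S assume "S \<in> Ssets B l"
    then have "{j\<in>S. P j} = {j\<in>{..<B}. j \<in> S \<and> P j}" by (auto simp: Ssets_def)
    then show "card {j\<in>S. P j} = (\<Sum>j\<in>{..<B}. if j \<in> S \<and> P j then 1 else 0)"
      using card_filter_sum[of "{..<B}" "\<lambda>j. j \<in> S \<and> P j"] by simp
  qed
  also have "\<dots> = (\<Sum>j\<in>{..<B}. \<Sum>S\<in>Ssets B l. if j \<in> S \<and> P j then 1 else 0)"
    by (rule sum.swap)
  also have "\<dots> = (\<Sum>j\<in>{..<B}. if P j then (B - 1) choose (l - 1) else 0)"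
  proof (rule sum.cong[OF refl])
    fix j assume j: "j \<in> {..<B}"
    have "(\<Sum>S\<in>Ssets B l. if j \<in> S \<and> P j then 1 else 0) = (if P j then card {S\<in>Ssets B l. j \<in> S} else 0)"
      by (simp add: card_filter_sum[OF Ssets_finite])
    then show "(\<Sum>S\<in>Ssets B l. if j \<in> S \<and> P j then 1 else 0) = (if P j then (B - 1) choose (l - 1) else 0)"
      using card_Ssets_mem[of j B l] j assms by simp
  qed
  also have "\<dots> = card {j\<in>{..<B}. P j} * ((B - 1) choose (l - 1))"
    by (simp add: sum.inter_filter[symmetric])
  finally show ?thesis .
qed

lemma binom_id:
  assumes "0 < l" "l \<le> B"
  shows "B * ((B - 1) choose (l - 1)) = l * (B choose l)"
proof -
  obtain b k where "B = Suc b" "l = Suc k" using assms by (metis Suc_pred' le_trans less_le_trans not0_implies_Suc not_le order_refl zero_less_iff_neq_zero)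
  then show ?thesis using Suc_times_binomial[of k b] by simp
qed

lemma rhat_nonneg: "0 \<le> rhat req B l t S $ i"
  by (simp add: rhat_def)

lemma card_fibers:
  assumes "finite S"
  shows "(\<Sum>i\<in>UNIV. card {j\<in>S. (f j :: 'n::finite) = i}) = card S"
proof -
  have "(\<Sum>i\<in>UNIV. card {j\<in>S. f j = i}) = (\<Sum>i\<in>UNIV. \<Sum>j\<in>S. if f j = i then 1 else 0)"
    using assms by (simp add: card_filter_sum)
  also have "\<dots> = (\<Sum>j\<in>S. \<Sum>i\<in>UNIV. if f j = i then 1 else 0)" by (rule sum.swap)
  also have "\<dots> = (\<Sum>j\<in>S. 1)" by simp
  finally show ?thesis by simp
qed

lemma rhat_sum:
  assumes "S \<in> Ssets B l" "0 < l"
  shows "(\<Sum>i\<in>UNIV. rhat req B l t S $ i) = real B"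
proof -
  have fin: "finite S" "card S = l" using assms by (auto simp: Ssets_def finite_subset)
  have "(\<Sum>i\<in>UNIV. rhat req B l t S $ i) = (real B / real l) * (\<Sum>i\<in>UNIV. real (card {j\<in>S. req t j = i}))"
    by (simp add: rhat_def sum_distrib_left)
  also have "(\<Sum>i\<in>UNIV. real (card {j\<in>S. req t j = i})) = real l"
    using card_fibers[OF fin(1), of "req t"] fin(2) by (metis of_nat_sum)
  finally show ?thesis using assms by simp
qed

lemma unbiased:
  assumes "0 < l" "l \<le> B"
  shows "(\<Sum>S\<in>Ssets B l. rhat req B l t S) = real (card (Ssets B l)) *\<^sub>R req_count req B t"
proof (rule vec_eq_iff[THEN iffD2], rule allI)
  fix i
  let ?P = "\<lambda>j. req t j = i"
  have "(\<Sum>S\<in>Ssets B l. rhat req B l t S) $ i = (real B / real l) * real (\<Sum>S\<in>Ssets B l. card {j\<in>S. ?P j})"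
    by (simp add: rhat_def sum_component sum_distrib_left)
  also have "\<dots> = (real B / real l) * (real (card {j\<in>{..<B}. ?P j}) * real ((B - 1) choose (l - 1)))"
    using sum_card_filter[OF assms(1), where B=B and P="?P"] by simp
  also have "\<dots> = real (card {j\<in>{..<B}. ?P j}) * (real (B * ((B - 1) choose (l - 1))) / real l)"
    by (simp add: field_simps)
  also have "\<dots> = real (card {j\<in>{..<B}. ?P j}) * real (B choose l)"
    unfolding binom_id[OF assms] using assms by simp
  also have "\<dots> = (real (card (Ssets B l)) *\<^sub>R req_count req B t) $ i"
    by (simp add: req_count_def card_Ssets lessThan_def)
  finally show "(\<Sum>S\<in>Ssets B l. rhat req B l t S) $ i = (real (card (Ssets B l)) *\<^sub>R req_count req B t) $ i" .
qed



definition Pm :: "nat \<Rightarrow> nat \<Rightarrow> nat set measure" where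
  "Pm B l = measure_pmf (pmf_of_set (Ssets B l))"

lemma slot_eq: "slot_measure B l \<eta> = Pm B l \<Otimes>\<^sub>M Um \<eta>"
  by (simp add: slot_measure_def sample_pmf_def Ssets_def Um_def Qc_def Pm_def)

lemma prob_Pm: "prob_space (Pm B l)"
  unfolding Pm_def by (rule prob_space_measure_pmf)

lemma prob_slot: "0 < \<eta> \<Longrightarrow> prob_space (slot_measure B l \<eta> :: (nat set \<times> (real^'n::finite)) measure)"
  unfolding slot_eq by (intro prob_space_pair prob_Pm prob_Um)

lemma meas_snd_Um:
  assumes "f \<in> borel_measurable borel"
  shows "(\<lambda>y. f (snd y)) \<in> borel_measurable (X \<Otimes>\<^sub>M Um \<eta>)"
proof (rule measurable_compose[OF measurable_snd])
  show "f \<in> borel_measurable (Um \<eta>)" using assms by (simp add: measurable_cong_sets[OF sets_Um refl])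
qed

lemma meas_Pm[simp]: "f \<in> measurable (Pm B l) N \<longleftrightarrow> f \<in> UNIV \<rightarrow> space N"
  unfolding Pm_def by simp

lemma meas_fst_Pm:
  assumes "f \<in> UNIV \<rightarrow> space N"
  shows "(\<lambda>y. f (fst y)) \<in> measurable (Pm B l \<Otimes>\<^sub>M X) N"
  by (rule measurable_compose[OF measurable_fst]) (simp add: assms)

lemma nn_Pm:
  assumes "0 < l" "l \<le> B"
  shows "(\<integral>\<^sup>+S. f S \<partial>Pm B l) = (\<Sum>S\<in>Ssets B l. f S) / of_nat (card (Ssets B l))"
  unfolding Pm_def using assms Ssets_ne[of l B] Ssets_finite[of B l]
  by (simp add: nn_integral_pmf_of_set)

lemma slot_lemma:
  fixes R :: "real^'n::finite"
  assumes orc: "is_min_oracle C M" and Mm[measurable]: "M \<in> borel_measurable borel" and eta: "0 < \<eta>"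
    and l: "0 < l" "l \<le> B"
  shows "(\<integral>\<^sup>+y. ennreal (req_count req B t \<bullet> M (R + snd y)) \<partial>slot_measure B l \<eta>)
    \<le> (\<integral>\<^sup>+y. ennreal (Phi M \<eta> (R + rhat req B l t (fst y)) - Phi M \<eta> R) \<partial>(slot_measure B l \<eta> :: (nat set \<times> (real^'n)) measure))
       + ennreal (real B * real B / \<eta>)"
proof -
  interpret U: prob_space "Um \<eta> :: (real^'n) measure" using prob_Um[OF eta] .
  interpret P: prob_space "Pm B l" by (rule prob_Pm)
  have U1: "emeasure (Um \<eta> :: (real^'n) measure) UNIV = 1" using U.emeasure_space_1 by simp
  define A where "A = Ssets B l"
  define n where "n = card A"
  have n0: "0 < n" unfolding n_def A_def using Ssets_ne[of l B] Ssets_finite[of B l] l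
    by (simp add: card_gt_0_iff)
  define r where "r = req_count req B t"
  define D where "D S = Phi M \<eta> (R + rhat req B l t S) - Phi M \<eta> R" for S
  have D0: "0 \<le> D S" for S
  proof -
    have "Phi M \<eta> R \<le> Phi M \<eta> (R + rhat req B l t S)"
      by (rule Phi_mono[OF orc Mm eta]) (rule rhat_nonneg)
    then show ?thesis unfolding D_def by simp
  qed
  have int_r: "integrable (Um \<eta>) (\<lambda>\<gamma>. w \<bullet> M (R + \<gamma>))" for w :: "real^'n"
  proof (rule integrable_Um_bound[OF eta])
    show "(\<lambda>\<gamma>. w \<bullet> M (R + \<gamma>)) \<in> borel_measurable borel" by measurable
    fix x show "\<bar>w \<bullet> M (R + x)\<bar> \<le> (\<Sum>i\<in>UNIV. \<bar>w $ i\<bar>)" by (rule abs_inner_simplex_le[OF M_in[OF orc]])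
  qed
  have r0: "0 \<le> r \<bullet> M (R + \<gamma>)" for \<gamma>
    unfolding r_def by (rule inner_simplex_nonneg[OF M_in[OF orc]]) (simp add: req_count_def)
  have LHS: "(\<integral>\<^sup>+y. ennreal (r \<bullet> M (R + snd y)) \<partial>slot_measure B l \<eta>)
      = ennreal (\<integral>\<gamma>. r \<bullet> M (R + \<gamma>) \<partial>Um \<eta>)"
  proof -
    have "(\<integral>\<^sup>+y. ennreal (r \<bullet> M (R + snd y)) \<partial>slot_measure B l \<eta>)
       = (\<integral>\<^sup>+S. \<integral>\<^sup>+\<gamma>. ennreal (r \<bullet> M (R + \<gamma>)) \<partial>Um \<eta> \<partial>Pm B l)"
      unfolding slot_eq by (subst U.nn_integral_fst[symmetric]) (auto intro!: meas_snd_Um)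
    also have "\<dots> = (\<integral>\<^sup>+S. ennreal (\<integral>\<gamma>. r \<bullet> M (R + \<gamma>) \<partial>Um \<eta>) \<partial>Pm B l)"
      using int_r r0 by (subst nn_integral_eq_integral) auto
    also have "\<dots> = ennreal (\<integral>\<gamma>. r \<bullet> M (R + \<gamma>) \<partial>Um \<eta>)"
      by (simp add: P.emeasure_space_1)
    finally show ?thesis .
  qed
  have RHS: "(\<integral>\<^sup>+y. ennreal (D (fst y)) \<partial>(slot_measure B l \<eta> :: (nat set \<times> (real^'n)) measure)) = ennreal ((\<Sum>S\<in>A. D S) / real n)"
  proof -
    have "(\<integral>\<^sup>+y. ennreal (D (fst y)) \<partial>(slot_measure B l \<eta> :: (nat set \<times> (real^'n)) measure))
       = (\<integral>\<^sup>+S. \<integral>\<^sup>+\<gamma>. ennreal (D S) \<partial>(Um \<eta> :: (real^'n) measure) \<partial>Pm B l)"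
      unfolding slot_eq by (subst U.nn_integral_fst[symmetric]) (auto intro!: meas_fst_Pm)
    also have "\<dots> = (\<integral>\<^sup>+S. ennreal (D S) \<partial>Pm B l)"
      by (simp add: U1)
    also have "\<dots> = (\<Sum>S\<in>A. ennreal (D S)) / of_nat n"
      unfolding A_def n_def by (rule nn_Pm[OF l])
    also have "\<dots> = ennreal ((\<Sum>S\<in>A. D S) / real n)"
      using D0 n0 by (simp add: ennreal_of_nat_eq_real_of_nat divide_ennreal sum_nonneg)
    finally show ?thesis .
  qed
  have runb: "r = (1 / real n) *\<^sub>R (\<Sum>S\<in>A. rhat req B l t S)"
    unfolding A_def n_def r_def unbiased[OF l] using n0 by (simp add: n_def A_def)
  have "(\<integral>\<gamma>. r \<bullet> M (R + \<gamma>) \<partial>Um \<eta>) = (\<integral>\<gamma>. (\<Sum>S\<in>A. rhat req B l t S \<bullet> M (R + \<gamma>)) / real n \<partial>Um \<eta>)"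
    unfolding runb by (simp add: inner_sum_left)
  also have "\<dots> = (\<Sum>S\<in>A. (\<integral>\<gamma>. rhat req B l t S \<bullet> M (R + \<gamma>) \<partial>Um \<eta>)) / real n"
    using int_r by (simp add: Bochner_Integration.integral_sum)
  also have "\<dots> \<le> (\<Sum>S\<in>A. D S + real B * real B / \<eta>) / real n"
  proof (intro divide_right_mono sum_mono)
    fix S assume S: "S \<in> A"
    have "(\<integral>\<gamma>. rhat req B l t S \<bullet> M (R + \<gamma>) \<partial>Um \<eta>)
       \<le> Phi M \<eta> (R + rhat req B l t S) - Phi M \<eta> R
          + (\<Sum>i\<in>UNIV. rhat req B l t S $ i) * (\<Sum>i\<in>UNIV. rhat req B l t S $ i) / \<eta>"
      by (rule core[OF orc Mm eta rhat_nonneg])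
    then show "(\<integral>\<gamma>. rhat req B l t S \<bullet> M (R + \<gamma>) \<partial>Um \<eta>) \<le> D S + real B * real B / \<eta>"
      using rhat_sum[of S B l req t] S l unfolding A_def D_def by simp
  qed simp
  also have "\<dots> = (\<Sum>S\<in>A. D S) / real n + real B * real B / \<eta>"
    using n0 by (simp add: sum.distrib add_divide_distrib n_def)
  finally have real_ineq: "(\<integral>\<gamma>. r \<bullet> M (R + \<gamma>) \<partial>Um \<eta>) \<le> (\<Sum>S\<in>A. D S) / real n + real B * real B / \<eta>" .
  have "(\<integral>\<^sup>+y. ennreal (r \<bullet> M (R + snd y)) \<partial>slot_measure B l \<eta>)
      \<le> ennreal ((\<Sum>S\<in>A. D S) / real n) + ennreal (real B * real B / \<eta>)"
    unfolding LHS using real_ineq D0 n0 eta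
    by (subst ennreal_plus[symmetric]) (auto intro!: ennreal_leI divide_nonneg_nonneg sum_nonneg)
  then show ?thesis using RHS unfolding r_def D_def by simp
qed



definition Rh :: "(nat \<Rightarrow> nat \<Rightarrow> 'n::finite) \<Rightarrow> nat \<Rightarrow> nat \<Rightarrow> nat \<Rightarrow> (nat \<Rightarrow> nat set \<times> (real^'n)) \<Rightarrow> real^'n" where
  "Rh req B l k om = (\<Sum>s\<in>{1..<k}. rhat req B l s (fst (om s)))"

definition Gt :: "(real^'n::finite \<Rightarrow> real^'n) \<Rightarrow> (nat \<Rightarrow> nat \<Rightarrow> 'n) \<Rightarrow> nat \<Rightarrow> nat \<Rightarrow> nat \<Rightarrow> (nat \<Rightarrow> nat set \<times> (real^'n)) \<Rightarrow> real" where
  "Gt M req B l t om = req_count req B t \<bullet> M (Rh req B l t om + snd (om t))"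

lemma Gt_eq: "req_count req B t \<bullet> nfpl_decision M req B l t om = Gt M req B l t om"
  by (simp add: Gt_def nfpl_decision_def Rh_def)

lemma Rh_upd: "k \<le> i \<Longrightarrow> Rh req B l k (om(i := y)) = Rh req B l k om"
  unfolding Rh_def by (rule sum.cong) auto

lemma Rh_Suc: "Rh req B l (Suc (Suc k)) (om(Suc k := y)) = Rh req B l (Suc k) om + rhat req B l (Suc k) (fst y)"
proof -
  have e: "{1..<Suc (Suc k)} = insert (Suc k) {1..<Suc k}" by auto
  have "Rh req B l (Suc (Suc k)) (om(Suc k := y))
      = (\<Sum>s\<in>insert (Suc k) {1..<Suc k}. rhat req B l s (fst ((om(Suc k := y)) s)))"
    unfolding Rh_def e ..
  also have "\<dots> = rhat req B l (Suc k) (fst ((om(Suc k := y)) (Suc k)))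
      + (\<Sum>s\<in>{1..<Suc k}. rhat req B l s (fst ((om(Suc k := y)) s)))"
    by (rule sum.insert) auto
  also have "(\<Sum>s\<in>{1..<Suc k}. rhat req B l s (fst ((om(Suc k := y)) s))) = Rh req B l (Suc k) om"
    unfolding Rh_def by (rule sum.cong) auto
  also have "rhat req B l (Suc k) (fst ((om(Suc k := y)) (Suc k))) + Rh req B l (Suc k) om
      = Rh req B l (Suc k) om + rhat req B l (Suc k) (fst y)"
    by (simp add: add.commute)
  finally show ?thesis .
qed

lemma Gt_upd: "t \<le> k \<Longrightarrow> Gt M req B l t (om(Suc k := y)) = Gt M req B l t om"
  unfolding Gt_def by (simp add: Rh_upd)

lemma Gt_Suc: "Gt M req B l (Suc k) (om(Suc k := y)) = req_count req B (Suc k) \<bullet> M (Rh req B l (Suc k) om + snd y)"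
  unfolding Gt_def by (simp add: Rh_upd)

lemma Rh_nonneg: "0 \<le> Rh req B l k om $ i"
  unfolding Rh_def by (simp add: sum_component sum_nonneg rhat_nonneg)

lemma Gt_nonneg: "is_min_oracle C M \<Longrightarrow> 0 \<le> Gt M req B l t om"
  unfolding Gt_def by (rule inner_simplex_nonneg[OF M_in]) (auto simp: req_count_def)

lemma meas_slot_fst:
  "(\<lambda>y. f (fst y)) \<in> borel_measurable (slot_measure B l \<eta> :: (nat set \<times> (real^'n::finite)) measure)"
  unfolding slot_eq by (rule meas_fst_Pm) simp

lemma meas_slot_snd:
  "f \<in> borel_measurable borel \<Longrightarrow> (\<lambda>y. f (snd y)) \<in> borel_measurable (slot_measure B l \<eta> :: (nat set \<times> (real^'n::finite)) measure)"
  unfolding slot_eq by (rule meas_snd_Um)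

lemma meas_Rh:
  assumes "{1..<k} \<subseteq> I"
  shows "Rh req B l k \<in> borel_measurable (PiM I (\<lambda>_. slot_measure B l \<eta>))"
  unfolding Rh_def
proof (rule borel_measurable_sum)
  fix s assume "s \<in> {1..<k}"
  then have s: "s \<in> I" using assms by auto
  show "(\<lambda>om. rhat req B l s (fst (om s))) \<in> borel_measurable (PiM I (\<lambda>_. slot_measure B l \<eta>))"
    by (rule measurable_compose[OF measurable_component_singleton[OF s] meas_slot_fst])
qed

lemma meas_snd_comp:
  assumes "t \<in> I"
  shows "(\<lambda>om. snd (om t)) \<in> borel_measurable (PiM I (\<lambda>_. slot_measure B l \<eta> :: (nat set \<times> (real^'n::finite)) measure))"
  by (rule measurable_compose[OF measurable_component_singleton[OF assms] meas_slot_snd[where f="\<lambda>x. x"]]) simp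

lemma meas_Gt:
  assumes Mm: "M \<in> borel_measurable borel" and "t \<in> I" "{1..<t} \<subseteq> I"
  shows "Gt M req B l t \<in> borel_measurable (PiM I (\<lambda>_. slot_measure B l \<eta>))"
proof -
  have "(\<lambda>om. Rh req B l t om + snd (om t)) \<in> borel_measurable (PiM I (\<lambda>_. slot_measure B l \<eta>))"
    by (intro borel_measurable_add meas_Rh meas_snd_comp assms)
  then have "(\<lambda>om. M (Rh req B l t om + snd (om t))) \<in> borel_measurable (PiM I (\<lambda>_. slot_measure B l \<eta>))"
    by (rule measurable_compose[OF _ Mm])
  then show ?thesis unfolding Gt_def by (intro borel_measurable_inner measurable_const) auto
qed

lemma meas_Phi:
  fixes M :: "real^'n::finite \<Rightarrow> real^'n"
  assumes Mm[measurable]: "M \<in> borel_measurable borel" and eta: "0 < \<eta>"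
  shows "Phi M \<eta> \<in> borel_measurable borel"
proof -
  interpret U: prob_space "Um \<eta> :: (real^'n::finite) measure" by (rule prob_Um[OF eta])
  have "(\<lambda>R. \<integral>\<gamma>. mm M (R + \<gamma>) \<partial>(Um \<eta> :: (real^'n) measure)) \<in> borel_measurable (borel :: (real^'n) measure)"
  proof (rule U.borel_measurable_lebesgue_integral)
    have "(\<lambda>x. mm M (fst x + snd x)) \<in> borel_measurable (borel \<Otimes>\<^sub>M (borel :: (real^'n) measure))"
      by measurable
    then show "(\<lambda>(R, \<gamma>). mm M (R + \<gamma>)) \<in> borel_measurable (borel \<Otimes>\<^sub>M (Um \<eta> :: (real^'n) measure))"
      by (simp add: case_prod_beta' measurable_cong_sets[OF sets_pair_measure_cong[OF refl sets_Um] refl])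
  qed
  then show ?thesis unfolding Phi_def[abs_def] .
qed



lemma ennreal_meas: "f \<in> borel_measurable N \<Longrightarrow> (\<lambda>x. ennreal (f x)) \<in> borel_measurable N"
  by (rule measurable_compose[OF _ measurable_ennreal])

lemma meas_Psi:
  fixes M :: "real^'n::finite \<Rightarrow> real^'n" and req :: "nat \<Rightarrow> nat \<Rightarrow> 'n"
  assumes Mm: "M \<in> borel_measurable borel" and eta: "0 < \<eta>"
  shows "(\<lambda>R. \<integral>\<^sup>+y. ennreal (Phi M \<eta> (R + rhat req B l s (fst y)) - Phi M \<eta> R) \<partial>(slot_measure B l \<eta> :: (nat set \<times> (real^'n)) measure))
     \<in> borel_measurable (borel :: (real^'n) measure)"
proof -
  interpret S: prob_space "slot_measure B l \<eta> :: (nat set \<times> (real^'n)) measure" by (rule prob_slot[OF eta])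
  have Ph: "Phi M \<eta> \<in> borel_measurable borel" by (rule meas_Phi[OF Mm eta])
  have f1: "(\<lambda>x::(real^'n) \<times> (nat set \<times> (real^'n)). fst x) \<in> borel_measurable (borel \<Otimes>\<^sub>M slot_measure B l \<eta>)"
    by (rule measurable_fst)
  have f2: "(\<lambda>x::(real^'n) \<times> (nat set \<times> (real^'n)). rhat req B l s (fst (snd x))) \<in> borel_measurable (borel \<Otimes>\<^sub>M slot_measure B l \<eta>)"
    by (rule measurable_compose[OF measurable_snd meas_slot_fst])
  have "(\<lambda>x::(real^'n) \<times> (nat set \<times> (real^'n)). ennreal (Phi M \<eta> (fst x + rhat req B l s (fst (snd x))) - Phi M \<eta> (fst x)))
      \<in> borel_measurable (borel \<Otimes>\<^sub>M slot_measure B l \<eta>)"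
    by (intro ennreal_meas borel_measurable_diff measurable_compose[OF _ Ph] borel_measurable_add f1 f2)
  then have "case_prod (\<lambda>R y. ennreal (Phi M \<eta> (R + rhat req B l s (fst y)) - Phi M \<eta> R))
      \<in> borel_measurable (borel \<Otimes>\<^sub>M (slot_measure B l \<eta> :: (nat set \<times> (real^'n)) measure))"
    by (simp add: case_prod_beta')
  from S.borel_measurable_nn_integral[OF this] show ?thesis by simp
qed

lemma induct_main:
  fixes M :: "real^'n::finite \<Rightarrow> real^'n" and req :: "nat \<Rightarrow> nat \<Rightarrow> 'n"
  assumes orc: "is_min_oracle C M" and Mm: "M \<in> borel_measurable borel" and eta: "0 < \<eta>"
    and l: "0 < l" "l \<le> B"
  shows "(\<integral>\<^sup>+om. ennreal (\<Sum>t\<in>{1..k}. Gt M req B l t om) \<partial>PiM {1..k} (\<lambda>_. slot_measure B l \<eta>))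
    \<le> (\<integral>\<^sup>+om. ennreal (Phi M \<eta> (Rh req B l (Suc k) om) - Phi M \<eta> 0) \<partial>PiM {1..k} (\<lambda>_. slot_measure B l \<eta>))
       + ennreal (real k * (real B * real B / \<eta>))"
proof (induction k)
  case 0
  then show ?case by simp
next
  case (Suc k)
  define Sl where "Sl = (slot_measure B l \<eta> :: (nat set \<times> (real^'n)) measure)"
  define I where "I = {1..k}"
  interpret PS: product_sigma_finite "\<lambda>_::nat. Sl"
    unfolding product_sigma_finite_def Sl_def using prob_space_imp_sigma_finite[OF prob_slot[OF eta]] by simp
  interpret S: prob_space Sl unfolding Sl_def by (rule prob_slot[OF eta])
  interpret PI: prob_space "PiM I (\<lambda>_. Sl)" by (rule prob_space_PiM) (rule S.prob_space_axioms)
  have ins: "{1..Suc k} = insert (Suc k) I" unfolding I_def by auto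
  have nin: "Suc k \<notin> I" "finite I" unfolding I_def by auto
  define c where "c = real B * real B / \<eta>"
  have c0: "0 \<le> c" unfolding c_def using eta by simp
  define a where "a om = (\<Sum>t\<in>{1..k}. Gt M req B l t om)" for om
  define r where "r = req_count req B (Suc k)"
  define psi where "psi om = (\<integral>\<^sup>+y. ennreal (Phi M \<eta> (Rh req B l (Suc k) om + rhat req B l (Suc k) (fst y))
      - Phi M \<eta> (Rh req B l (Suc k) om)) \<partial>Sl)" for om
  define F where "F om = ennreal (Phi M \<eta> (Rh req B l (Suc k) om) - Phi M \<eta> 0)" for om
  have a0: "0 \<le> a om" for om unfolding a_def by (intro sum_nonneg Gt_nonneg[OF orc])
  have mGt: "Gt M req B l t \<in> borel_measurable (PiM J (\<lambda>_. Sl))" if "t \<in> J" "{1..<t} \<subseteq> J" for t J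
    unfolding Sl_def by (rule meas_Gt[OF Mm that])
  have ma: "(\<lambda>om. ennreal (a om)) \<in> borel_measurable (PiM I (\<lambda>_. Sl))"
    unfolding a_def by (intro ennreal_meas borel_measurable_sum mGt) (auto simp: I_def)
  have mRh: "Rh req B l (Suc k) \<in> borel_measurable (PiM I (\<lambda>_. Sl))"
    unfolding Sl_def by (rule meas_Rh) (auto simp: I_def)
  have mPhi: "Phi M \<eta> \<in> borel_measurable borel" by (rule meas_Phi[OF Mm eta])
  have mF: "F \<in> borel_measurable (PiM I (\<lambda>_. Sl))"
    unfolding F_def[abs_def] by (intro ennreal_meas borel_measurable_diff measurable_compose[OF mRh mPhi] measurable_const) simp
  have mpsi: "psi \<in> borel_measurable (PiM I (\<lambda>_. Sl))"
    unfolding psi_def[abs_def] Sl_def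
    by (rule measurable_compose[OF mRh[unfolded Sl_def] meas_Psi[OF Mm eta]])
  have mL: "(\<lambda>om. ennreal (\<Sum>t\<in>{1..Suc k}. Gt M req B l t om)) \<in> borel_measurable (PiM (insert (Suc k) I) (\<lambda>_. Sl))"
    by (intro ennreal_meas borel_measurable_sum mGt) (auto simp: I_def)
  have "(\<integral>\<^sup>+om. ennreal (\<Sum>t\<in>{1..Suc k}. Gt M req B l t om) \<partial>PiM {1..Suc k} (\<lambda>_. Sl))
      = (\<integral>\<^sup>+om. \<integral>\<^sup>+y. ennreal (\<Sum>t\<in>{1..Suc k}. Gt M req B l t (om(Suc k := y))) \<partial>Sl \<partial>PiM I (\<lambda>_. Sl))"
    by (rule PS.product_nn_integral_insert[OF nin(2) nin(1) mL, folded ins])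
  also have "\<dots> \<le> (\<integral>\<^sup>+om. ennreal (a om) + psi om + ennreal c \<partial>PiM I (\<lambda>_. Sl))"
  proof (rule nn_integral_mono)
    fix om
    define R where "R = Rh req B l (Suc k) om"
    have eq: "(\<Sum>t\<in>{1..Suc k}. Gt M req B l t (om(Suc k := y))) = a om + r \<bullet> M (R + snd y)" for y
    proof -
      have s1: "(\<Sum>t\<in>{1..Suc k}. Gt M req B l t (om(Suc k := y)))
          = Gt M req B l (Suc k) (om(Suc k := y)) + (\<Sum>t\<in>{1..k}. Gt M req B l t (om(Suc k := y)))"
        using ins nin unfolding I_def by simp
      have s2: "(\<Sum>t\<in>{1..k}. Gt M req B l t (om(Suc k := y))) = a om"
        unfolding a_def by (rule sum.cong) (auto simp: Gt_upd)
      show ?thesis unfolding s1 s2 Gt_Suc R_def r_def by simp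
    qed
    have b0: "0 \<le> r \<bullet> M (R + snd y)" for y
      unfolding r_def by (rule inner_simplex_nonneg[OF M_in[OF orc]]) (simp add: req_count_def)
    have mb: "(\<lambda>y. ennreal (r \<bullet> M (R + snd y))) \<in> borel_measurable Sl"
      unfolding Sl_def
      by (intro ennreal_meas meas_slot_snd[where f="\<lambda>\<gamma>. r \<bullet> M (R + \<gamma>)"]
          borel_measurable_inner measurable_const measurable_compose[OF _ Mm] borel_measurable_add) auto
    have "(\<integral>\<^sup>+y. ennreal (\<Sum>t\<in>{1..Suc k}. Gt M req B l t (om(Suc k := y))) \<partial>Sl)
        = (\<integral>\<^sup>+y. ennreal (a om) + ennreal (r \<bullet> M (R + snd y)) \<partial>Sl)"
      unfolding eq by (rule nn_integral_cong) (rule ennreal_plus[OF a0 b0])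
    also have "\<dots> = ennreal (a om) + (\<integral>\<^sup>+y. ennreal (r \<bullet> M (R + snd y)) \<partial>Sl)"
      using mb by (subst nn_integral_add) (auto simp: S.emeasure_space_1)
    also have "\<dots> \<le> ennreal (a om) + (psi om + ennreal c)"
      using slot_lemma[OF orc Mm eta l, of req "Suc k" R] unfolding psi_def R_def c_def r_def Sl_def
      by (intro add_left_mono) simp
    finally show "(\<integral>\<^sup>+y. ennreal (\<Sum>t\<in>{1..Suc k}. Gt M req B l t (om(Suc k := y))) \<partial>Sl)
        \<le> ennreal (a om) + psi om + ennreal c" by (simp add: add.assoc)
  qed
  also have "\<dots> = (\<integral>\<^sup>+om. ennreal (a om) \<partial>PiM I (\<lambda>_. Sl)) + (\<integral>\<^sup>+om. psi om \<partial>PiM I (\<lambda>_. Sl)) + ennreal c"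
    using ma mpsi by (simp add: nn_integral_add PI.emeasure_space_1)
  also have "\<dots> \<le> ((\<integral>\<^sup>+om. F om \<partial>PiM I (\<lambda>_. Sl)) + ennreal (real k * c)) + (\<integral>\<^sup>+om. psi om \<partial>PiM I (\<lambda>_. Sl)) + ennreal c"
    using Suc.IH unfolding a_def F_def Sl_def I_def c_def by (intro add_right_mono) simp
  also have "\<dots> = ((\<integral>\<^sup>+om. F om \<partial>PiM I (\<lambda>_. Sl)) + (\<integral>\<^sup>+om. psi om \<partial>PiM I (\<lambda>_. Sl))) + ennreal (real (Suc k) * c)"
  proof -
    have h: "ennreal (real k * c) + ennreal c = ennreal (real (Suc k) * c)"
    proof -
      have e: "real k * c + c = real (Suc k) * c" by (simp add: algebra_simps)
      have "ennreal (real k * c) + ennreal c = ennreal (real k * c + c)"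
        using c0 by (intro ennreal_plus[symmetric]) auto
      then show ?thesis unfolding e .
    qed
    show ?thesis unfolding h[symmetric] by (simp only: ac_simps)
  qed
  also have "(\<integral>\<^sup>+om. F om \<partial>PiM I (\<lambda>_. Sl)) + (\<integral>\<^sup>+om. psi om \<partial>PiM I (\<lambda>_. Sl))
      = (\<integral>\<^sup>+om. ennreal (Phi M \<eta> (Rh req B l (Suc (Suc k)) om) - Phi M \<eta> 0) \<partial>PiM {1..Suc k} (\<lambda>_. Sl))"
  proof -
    have mR2: "(\<lambda>om. ennreal (Phi M \<eta> (Rh req B l (Suc (Suc k)) om) - Phi M \<eta> 0)) \<in> borel_measurable (PiM (insert (Suc k) I) (\<lambda>_. Sl))"
      unfolding Sl_def
      by (intro ennreal_meas borel_measurable_diff measurable_compose[OF meas_Rh mPhi] measurable_const) (auto simp: I_def)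
    have "(\<integral>\<^sup>+om. ennreal (Phi M \<eta> (Rh req B l (Suc (Suc k)) om) - Phi M \<eta> 0) \<partial>PiM {1..Suc k} (\<lambda>_. Sl))
       = (\<integral>\<^sup>+om. \<integral>\<^sup>+y. ennreal (Phi M \<eta> (Rh req B l (Suc (Suc k)) (om(Suc k := y))) - Phi M \<eta> 0) \<partial>Sl \<partial>PiM I (\<lambda>_. Sl))"
      by (rule PS.product_nn_integral_insert[OF nin(2) nin(1) mR2, folded ins])
    also have "\<dots> = (\<integral>\<^sup>+om. F om + psi om \<partial>PiM I (\<lambda>_. Sl))"
    proof (rule nn_integral_cong)
      fix om
      define R where "R = Rh req B l (Suc k) om"
      have "Phi M \<eta> 0 \<le> Phi M \<eta> (0 + R)"
        by (rule Phi_mono[OF orc Mm eta]) (simp add: R_def Rh_nonneg)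
      then have R0: "Phi M \<eta> 0 \<le> Phi M \<eta> R" by simp
      have D0: "Phi M \<eta> R \<le> Phi M \<eta> (R + rhat req B l (Suc k) S)" for S
        by (rule Phi_mono[OF orc Mm eta]) (rule rhat_nonneg)
      have md: "(\<lambda>y. ennreal (Phi M \<eta> (R + rhat req B l (Suc k) (fst y)) - Phi M \<eta> R)) \<in> borel_measurable Sl"
        unfolding Sl_def by (rule meas_slot_fst)
      have "(\<integral>\<^sup>+y. ennreal (Phi M \<eta> (Rh req B l (Suc (Suc k)) (om(Suc k := y))) - Phi M \<eta> 0) \<partial>Sl)
          = (\<integral>\<^sup>+y. F om + ennreal (Phi M \<eta> (R + rhat req B l (Suc k) (fst y)) - Phi M \<eta> R) \<partial>Sl)"
      proof (rule nn_integral_cong)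
        fix y :: "nat set \<times> (real^'n)"
        have "Phi M \<eta> (R + rhat req B l (Suc k) (fst y)) - Phi M \<eta> 0
           = (Phi M \<eta> R - Phi M \<eta> 0) + (Phi M \<eta> (R + rhat req B l (Suc k) (fst y)) - Phi M \<eta> R)" by simp
        then show "ennreal (Phi M \<eta> (Rh req B l (Suc (Suc k)) (om(Suc k := y))) - Phi M \<eta> 0)
          = F om + ennreal (Phi M \<eta> (R + rhat req B l (Suc k) (fst y)) - Phi M \<eta> R)"
          unfolding Rh_Suc F_def R_def[symmetric] using R0 D0[of "fst y"]
          by (simp add: ennreal_plus[symmetric])
      qed
      also have "\<dots> = F om + psi om"
        using md by (subst nn_integral_add) (auto simp: S.emeasure_space_1 psi_def R_def)
      finally show "(\<integral>\<^sup>+y. ennreal (Phi M \<eta> (Rh req B l (Suc (Suc k)) (om(Suc k := y))) - Phi M \<eta> 0) \<partial>Sl)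
          = F om + psi om" .
    qed
    also have "\<dots> = (\<integral>\<^sup>+om. F om \<partial>PiM I (\<lambda>_. Sl)) + (\<integral>\<^sup>+om. psi om \<partial>PiM I (\<lambda>_. Sl))"
      using mF mpsi by (rule nn_integral_add)
    finally show ?thesis by simp
  qed
  finally show ?case unfolding Sl_def c_def .
qed



lemma Phi_upper:
  fixes R x :: "real^'n::finite"
  assumes orc: "is_min_oracle C M" and Mm: "M \<in> borel_measurable borel" and eta: "0 < \<eta>"
    and x: "x \<in> capped_simplex C"
  shows "Phi M \<eta> R \<le> R \<bullet> x + real C * \<eta>"
proof -
  interpret U: prob_space "Um \<eta> :: (real^'n) measure" by (rule prob_Um[OF eta])
  have "Phi M \<eta> R \<le> (\<integral>\<gamma>. R \<bullet> x + real C * \<eta> \<partial>(Um \<eta> :: (real^'n) measure))"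
    unfolding Phi_def
  proof (rule integral_mono_AE)
    show "integrable (Um \<eta>) (\<lambda>\<gamma>. mm M (R + \<gamma>))" by (rule integrable_mm[OF orc Mm eta])
    show "integrable (Um \<eta>) (\<lambda>\<gamma>::real^'n. R \<bullet> x + real C * \<eta>)" by simp
    show "AE \<gamma> in Um \<eta>. mm M (R + \<gamma>) \<le> R \<bullet> x + real C * \<eta>"
      using AE_Um[of \<eta>]
    proof eventually_elim
      case (elim \<gamma>)
      have g: "0 \<le> \<gamma> $ i \<and> \<gamma> $ i \<le> \<eta>" for i using elim by (auto simp: Qc_def mem_box_cart)
      have "\<gamma> \<bullet> x = (\<Sum>i\<in>UNIV. \<gamma> $ i * x $ i)" by (simp add: inner_vec_def)
      also have "\<dots> \<le> (\<Sum>i\<in>UNIV. \<eta> * x $ i)"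
        using x g by (intro sum_mono mult_right_mono) (auto simp: capped_simplex_def)
      also have "\<dots> = \<eta> * real C" using x by (simp add: sum_distrib_left[symmetric] capped_simplex_def)
      finally have "\<gamma> \<bullet> x \<le> real C * \<eta>" by (simp only: mult.commute)
      moreover have "mm M (R + \<gamma>) \<le> (R + \<gamma>) \<bullet> x" by (rule mm_le[OF orc x])
      ultimately show ?case by (simp add: inner_add_left)
    qed
  qed
  moreover have "measure (Um \<eta> :: (real^'n) measure) UNIV = 1" using U.prob_space by simp
  ultimately show ?thesis by simp
qed

lemma Phi0_nonneg:
  assumes orc: "is_min_oracle C M" and eta: "0 < \<eta>"
  shows "0 \<le> Phi M \<eta> 0"
  unfolding Phi_def
proof (rule integral_nonneg_AE)
  show "AE \<gamma> in Um \<eta>. 0 \<le> mm M (0 + \<gamma>)"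
    using AE_Um[of \<eta>]
  proof eventually_elim
    case (elim \<gamma>)
    then have "\<And>i. 0 \<le> \<gamma> $ i" by (auto simp: Qc_def mem_box_cart)
    then show ?case unfolding mm_def by (simp add: inner_simplex_nonneg[OF M_in[OF orc]])
  qed
qed

lemma slot_linear:
  fixes x :: "real^'n::finite"
  assumes eta: "0 < \<eta>" and l: "0 < l" "l \<le> B" and x: "x \<in> capped_simplex C"
  shows "(\<integral>\<^sup>+y. ennreal (rhat req B l t (fst y) \<bullet> x) \<partial>(slot_measure B l \<eta> :: (nat set \<times> (real^'n)) measure))
     = ennreal (req_count req B t \<bullet> x)"
proof -
  interpret U: prob_space "Um \<eta> :: (real^'n) measure" using prob_Um[OF eta] .
  have U1: "emeasure (Um \<eta> :: (real^'n) measure) UNIV = 1" using U.emeasure_space_1 by simp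
  define A where "A = Ssets B l"
  define n where "n = card A"
  have n0: "0 < n" unfolding n_def A_def using Ssets_ne[of l B] Ssets_finite[of B l] l
    by (simp add: card_gt_0_iff)
  have nn: "0 \<le> rhat req B l t S \<bullet> x" for S
    by (rule inner_simplex_nonneg[OF x rhat_nonneg])
  have "(\<integral>\<^sup>+y. ennreal (rhat req B l t (fst y) \<bullet> x) \<partial>(slot_measure B l \<eta> :: (nat set \<times> (real^'n)) measure))
     = (\<integral>\<^sup>+S. \<integral>\<^sup>+\<gamma>. ennreal (rhat req B l t S \<bullet> x) \<partial>(Um \<eta> :: (real^'n) measure) \<partial>Pm B l)"
    unfolding slot_eq by (subst U.nn_integral_fst[symmetric]) (auto intro!: meas_fst_Pm)
  also have "\<dots> = (\<integral>\<^sup>+S. ennreal (rhat req B l t S \<bullet> x) \<partial>Pm B l)"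
    by (simp add: U1)
  also have "\<dots> = (\<Sum>S\<in>A. ennreal (rhat req B l t S \<bullet> x)) / of_nat n"
    unfolding A_def n_def by (rule nn_Pm[OF l])
  also have "\<dots> = ennreal ((\<Sum>S\<in>A. rhat req B l t S \<bullet> x) / real n)"
    using nn n0 by (simp add: ennreal_of_nat_eq_real_of_nat divide_ennreal sum_nonneg)
  also have "(\<Sum>S\<in>A. rhat req B l t S \<bullet> x) / real n = req_count req B t \<bullet> x"
    using n0 unfolding inner_sum_left[symmetric] A_def n_def unbiased[OF l] by simp
  finally show ?thesis .
qed

lemma induct_linear:
  fixes M :: "real^'n::finite \<Rightarrow> real^'n" and req :: "nat \<Rightarrow> nat \<Rightarrow> 'n" and x :: "real^'n"
  assumes eta: "0 < \<eta>" and l: "0 < l" "l \<le> B" and x: "x \<in> capped_simplex C"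
  shows "(\<integral>\<^sup>+om. ennreal (Rh req B l (Suc k) om \<bullet> x) \<partial>PiM {1..k} (\<lambda>_. slot_measure B l \<eta>))
    = ennreal (\<Sum>t\<in>{1..k}. req_count req B t \<bullet> x)"
proof (induction k)
  case 0
  then show ?case by (simp add: Rh_def)
next
  case (Suc k)
  define Sl where "Sl = (slot_measure B l \<eta> :: (nat set \<times> (real^'n)) measure)"
  define I where "I = {1..k}"
  interpret PS: product_sigma_finite "\<lambda>_::nat. Sl"
    unfolding product_sigma_finite_def Sl_def using prob_space_imp_sigma_finite[OF prob_slot[OF eta]] by simp
  interpret S: prob_space Sl unfolding Sl_def by (rule prob_slot[OF eta])
  have ins: "{1..Suc k} = insert (Suc k) I" unfolding I_def by auto
  have nin: "Suc k \<notin> I" "finite I" unfolding I_def by auto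
  have nnR: "0 \<le> Rh req B l j om \<bullet> x" for j om by (rule inner_simplex_nonneg[OF x Rh_nonneg])
  have nnr: "0 \<le> rhat req B l j S \<bullet> x" for j S by (rule inner_simplex_nonneg[OF x rhat_nonneg])
  have m2: "(\<lambda>om. ennreal (Rh req B l (Suc (Suc k)) om \<bullet> x)) \<in> borel_measurable (PiM (insert (Suc k) I) (\<lambda>_. Sl))"
    unfolding Sl_def
    by (intro ennreal_meas borel_measurable_inner measurable_const meas_Rh) (auto simp: I_def)
  have "(\<integral>\<^sup>+om. ennreal (Rh req B l (Suc (Suc k)) om \<bullet> x) \<partial>PiM {1..Suc k} (\<lambda>_. Sl))
      = (\<integral>\<^sup>+om. \<integral>\<^sup>+y. ennreal (Rh req B l (Suc (Suc k)) (om(Suc k := y)) \<bullet> x) \<partial>Sl \<partial>PiM I (\<lambda>_. Sl))"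
    by (rule PS.product_nn_integral_insert[OF nin(2) nin(1) m2, folded ins])
  also have "\<dots> = (\<integral>\<^sup>+om. ennreal (Rh req B l (Suc k) om \<bullet> x) + ennreal (req_count req B (Suc k) \<bullet> x) \<partial>PiM I (\<lambda>_. Sl))"
  proof (rule nn_integral_cong)
    fix om :: "nat \<Rightarrow> nat set \<times> (real^'n)"
    have "(\<integral>\<^sup>+y. ennreal (Rh req B l (Suc (Suc k)) (om(Suc k := y)) \<bullet> x) \<partial>Sl)
        = (\<integral>\<^sup>+y. ennreal (Rh req B l (Suc k) om \<bullet> x) + ennreal (rhat req B l (Suc k) (fst y) \<bullet> x) \<partial>Sl)"
    proof (rule nn_integral_cong)
      fix y :: "nat set \<times> (real^'n)"
      show "ennreal (Rh req B l (Suc (Suc k)) (om(Suc k := y)) \<bullet> x)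
          = ennreal (Rh req B l (Suc k) om \<bullet> x) + ennreal (rhat req B l (Suc k) (fst y) \<bullet> x)"
        unfolding Rh_Suc inner_add_left using nnR nnr by (simp add: ennreal_plus)
    qed
    also have "\<dots> = ennreal (Rh req B l (Suc k) om \<bullet> x) + (\<integral>\<^sup>+y. ennreal (rhat req B l (Suc k) (fst y) \<bullet> x) \<partial>Sl)"
      by (subst nn_integral_add) (auto simp: S.emeasure_space_1[unfolded Sl_def] Sl_def intro: meas_slot_fst)
    also have "\<dots> = ennreal (Rh req B l (Suc k) om \<bullet> x) + ennreal (req_count req B (Suc k) \<bullet> x)"
      unfolding Sl_def using slot_linear[OF eta l x] by simp
    finally show "(\<integral>\<^sup>+y. ennreal (Rh req B l (Suc (Suc k)) (om(Suc k := y)) \<bullet> x) \<partial>Sl)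
        = ennreal (Rh req B l (Suc k) om \<bullet> x) + ennreal (req_count req B (Suc k) \<bullet> x)" .
  qed
  also have "\<dots> = (\<integral>\<^sup>+om. ennreal (Rh req B l (Suc k) om \<bullet> x) \<partial>PiM I (\<lambda>_. Sl)) + ennreal (req_count req B (Suc k) \<bullet> x)"
  proof -
    interpret PI: prob_space "PiM I (\<lambda>_. Sl)" by (rule prob_space_PiM) (rule S.prob_space_axioms)
    have m1: "(\<lambda>om. ennreal (Rh req B l (Suc k) om \<bullet> x)) \<in> borel_measurable (PiM I (\<lambda>_. Sl))"
      unfolding Sl_def
      by (intro ennreal_meas borel_measurable_inner measurable_const meas_Rh) (auto simp: I_def)
    show ?thesis using m1 by (subst nn_integral_add) (auto simp: PI.emeasure_space_1)
  qed
  also have "\<dots> = ennreal (\<Sum>t\<in>{1..Suc k}. req_count req B t \<bullet> x)"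
  proof -
    have nn: "0 \<le> (\<Sum>t\<in>{1..k}. req_count req B t \<bullet> x)" "0 \<le> req_count req B (Suc k) \<bullet> x"
      by (auto intro!: sum_nonneg inner_simplex_nonneg[OF x] simp: req_count_def)
    have "(\<Sum>t\<in>{1..Suc k}. req_count req B t \<bullet> x) = (\<Sum>t\<in>{1..k}. req_count req B t \<bullet> x) + req_count req B (Suc k) \<bullet> x"
      by simp
    then show ?thesis using Suc.IH nn unfolding Sl_def I_def by (simp add: ennreal_plus)
  qed
  finally show ?case unfolding Sl_def .
qed



lemma arith_bound:
  fixes B C T :: nat
  assumes C: "1 \<le> C" and T: "1 \<le> T" and B: "0 < B"
  shows "real C * (real B * sqrt (real T / (2 * real C)))
      + real T * (real B * real B / (real B * sqrt (real T / (2 * real C))))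
      \<le> 2 * sqrt 2 * real B * sqrt (real C * real T)"
proof -
  define s where "s = sqrt (real T / (2 * real C))"
  have s0: "0 < s" unfolding s_def using C T by simp
  have s2: "s\<^sup>2 = real T / (2 * real C)" unfolding s_def using C T by simp
  define L where "L = real C * s + real T / s"
  have L0: "0 \<le> L" unfolding L_def using s0 by simp
  have "L\<^sup>2 = (real C)\<^sup>2 * s\<^sup>2 + 2 * real C * real T + (real T)\<^sup>2 / s\<^sup>2"
    unfolding L_def using s0 by (simp add: power2_eq_square field_simps)
  also have "\<dots> = 9 / 2 * (real C * real T)"
    unfolding s2 using C T by (simp add: power2_eq_square field_simps)
  finally have L2: "L\<^sup>2 = 9 / 2 * (real C * real T)" .
  have R2: "(2 * sqrt 2 * sqrt (real C * real T))\<^sup>2 = 8 * (real C * real T)"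
    by (simp add: power_mult_distrib)
  have "L \<le> 2 * sqrt 2 * sqrt (real C * real T)"
  proof (rule power2_le_imp_le)
    show "L\<^sup>2 \<le> (2 * sqrt 2 * sqrt (real C * real T))\<^sup>2" unfolding L2 R2 by simp
  qed simp
  then have "real B * L \<le> real B * (2 * sqrt 2 * sqrt (real C * real T))"
    by (rule mult_left_mono) simp
  moreover have "real C * (real B * s) + real T * (real B * real B / (real B * s)) = real B * L"
    unfolding L_def using B s0 by (simp add: field_simps)
  ultimately show ?thesis unfolding s_def by (simp add: ac_simps)
qed

lemma simplex_ne:
  assumes "C \<le> CARD('n::finite)"
  shows "capped_simplex C \<noteq> ({} :: (real^'n) set)"
proof -
  have "(\<chi> i. real C / real CARD('n)) \<in> (capped_simplex C :: (real^'n) set)"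
    using assms by (auto simp: capped_simplex_def)
  then show ?thesis by blast
qed

theorem corollary2:
  fixes req :: "nat \<Rightarrow> nat \<Rightarrow> 'n::finite"
    and M :: "real^'n \<Rightarrow> real^'n"
    and C B l T :: nat
  assumes "1 \<le> C" and "2 * C < CARD('n)"
    and "0 < l" and "l < B"
    and "is_min_oracle C M"
    and "M \<in> borel_measurable borel"
  shows "nfpl_regret C M req B l (real B * sqrt (real T / (2 * real C))) T
           \<le> 2 * sqrt 2 * real B * sqrt (real C * real T)"
proof -
  note orc = assms(5) and Mm = assms(6)
  have l: "0 < l" "l \<le> B" using assms by auto
  have B0: "0 < B" using assms by auto
  have ne: "capped_simplex C \<noteq> ({} :: (real^'n) set)" using assms(2) by (intro simplex_ne) simp
  define \<eta> where "\<eta> = real B * sqrt (real T / (2 * real C))"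
  show ?thesis
  proof (cases "T = 0")
    case True
    then show ?thesis using ne by (simp add: nfpl_regret_def)
  next
    case False
    then have T1: "1 \<le> T" by simp
    have eta: "0 < \<eta>" unfolding \<eta>_def using B0 assms(1) T1 by simp
    define P where "P = (nfpl_space B l \<eta> T :: (nat \<Rightarrow> nat set \<times> (real^'n)) measure)"
    have P_eq: "P = PiM {1..T} (\<lambda>_. (slot_measure B l \<eta> :: (nat set \<times> (real^'n)) measure))"
      unfolding P_def nfpl_space_def ..
    interpret PP: prob_space P unfolding P_eq by (rule prob_space_PiM) (rule prob_slot[OF eta])
    define c where "c = real B * real B / \<eta>"
    define f where "f om = (\<Sum>t\<in>{1..T}. Gt M req B l t om)" for om
    have f0: "0 \<le> f om" for om unfolding f_def by (intro sum_nonneg Gt_nonneg[OF orc])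
    have fm: "f \<in> borel_measurable P"
      unfolding f_def[abs_def] P_eq by (intro borel_measurable_sum meas_Gt[OF Mm]) auto
    have Ieq: "(\<integral>om. (\<Sum>t\<in>{1..T}. req_count req B t \<bullet> nfpl_decision M req B l t om) \<partial>P) = integral\<^sup>L P f"
      unfolding f_def Gt_eq ..
    have Ienn: "integral\<^sup>L P f = enn2real (\<integral>\<^sup>+om. ennreal (f om) \<partial>P)"
      using fm f0 by (intro integral_eq_nn_integral) auto
    have bound: "integral\<^sup>L P f - (real C * \<eta> + real T * c) \<le> (\<Sum>t\<in>{1..T}. req_count req B t \<bullet> x)"
      if x: "x \<in> capped_simplex C" for x
    proof -
      have mRh: "Rh req B l (Suc T) \<in> borel_measurable P"
        unfolding P_eq by (rule meas_Rh) auto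
      have m1: "(\<lambda>om. ennreal (Rh req B l (Suc T) om \<bullet> x)) \<in> borel_measurable P"
        by (intro ennreal_meas borel_measurable_inner measurable_const mRh) auto
      have "(\<integral>\<^sup>+om. ennreal (f om) \<partial>P)
          \<le> (\<integral>\<^sup>+om. ennreal (Phi M \<eta> (Rh req B l (Suc T) om) - Phi M \<eta> 0) \<partial>P) + ennreal (real T * c)"
        unfolding f_def P_eq c_def by (rule induct_main[OF orc Mm eta l])
      also have "\<dots> \<le> (\<integral>\<^sup>+om. ennreal (Rh req B l (Suc T) om \<bullet> x) + ennreal (real C * \<eta>) \<partial>P) + ennreal (real T * c)"
      proof (intro add_right_mono nn_integral_mono)
        fix om
        have "Phi M \<eta> (Rh req B l (Suc T) om) - Phi M \<eta> 0 \<le> Rh req B l (Suc T) om \<bullet> x + real C * \<eta>"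
          using Phi_upper[OF orc Mm eta x, of "Rh req B l (Suc T) om"] Phi0_nonneg[OF orc eta] by linarith
        then have "ennreal (Phi M \<eta> (Rh req B l (Suc T) om) - Phi M \<eta> 0) \<le> ennreal (Rh req B l (Suc T) om \<bullet> x + real C * \<eta>)"
          by (rule ennreal_leI)
        also have "\<dots> = ennreal (Rh req B l (Suc T) om \<bullet> x) + ennreal (real C * \<eta>)"
          using eta by (intro ennreal_plus inner_simplex_nonneg[OF x Rh_nonneg]) auto
        finally show "ennreal (Phi M \<eta> (Rh req B l (Suc T) om) - Phi M \<eta> 0)
            \<le> ennreal (Rh req B l (Suc T) om \<bullet> x) + ennreal (real C * \<eta>)" .
      qed
      also have "\<dots> = (ennreal (\<Sum>t\<in>{1..T}. req_count req B t \<bullet> x) + ennreal (real C * \<eta>)) + ennreal (real T * c)"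
      proof -
        have "(\<integral>\<^sup>+om. ennreal (Rh req B l (Suc T) om \<bullet> x) + ennreal (real C * \<eta>) \<partial>P)
           = (\<integral>\<^sup>+om. ennreal (Rh req B l (Suc T) om \<bullet> x) \<partial>P) + ennreal (real C * \<eta>)"
          using m1 by (subst nn_integral_add) (auto simp: PP.emeasure_space_1)
        also have "(\<integral>\<^sup>+om. ennreal (Rh req B l (Suc T) om \<bullet> x) \<partial>P) = ennreal (\<Sum>t\<in>{1..T}. req_count req B t \<bullet> x)"
          unfolding P_eq by (rule induct_linear[OF eta l x])
        finally show ?thesis by simp
      qed
      also have "\<dots> = ennreal ((\<Sum>t\<in>{1..T}. req_count req B t \<bullet> x) + real C * \<eta> + real T * c)"
      proof -
        have nn: "0 \<le> (\<Sum>t\<in>{1..T}. req_count req B t \<bullet> x)"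
          by (auto intro!: sum_nonneg inner_simplex_nonneg[OF x] simp: req_count_def)
        have "0 \<le> real C * \<eta>" "0 \<le> real T * c" using eta unfolding c_def by auto
        then show ?thesis using nn by (simp add: ennreal_plus)
      qed
      finally have "(\<integral>\<^sup>+om. ennreal (f om) \<partial>P) \<le> ennreal ((\<Sum>t\<in>{1..T}. req_count req B t \<bullet> x) + real C * \<eta> + real T * c)" .
      then have "enn2real (\<integral>\<^sup>+om. ennreal (f om) \<partial>P) \<le> (\<Sum>t\<in>{1..T}. req_count req B t \<bullet> x) + real C * \<eta> + real T * c"
      proof (rule enn2real_leI[rotated])
        show "0 \<le> (\<Sum>t\<in>{1..T}. req_count req B t \<bullet> x) + real C * \<eta> + real T * c"
          using eta unfolding c_def
          by (auto intro!: add_nonneg_nonneg sum_nonneg inner_simplex_nonneg[OF x] simp: req_count_def)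
      qed
      then show ?thesis unfolding Ienn by linarith
    qed
    have "integral\<^sup>L P f - (real C * \<eta> + real T * c) \<le> (INF x\<in>capped_simplex C. \<Sum>t\<in>{1..T}. req_count req B t \<bullet> x)"
      by (rule cINF_greatest[OF ne bound])
    then have "nfpl_regret C M req B l \<eta> T \<le> real C * \<eta> + real T * c"
      unfolding nfpl_regret_def P_def[symmetric] Ieq by linarith
    also have "\<dots> \<le> 2 * sqrt 2 * real B * sqrt (real C * real T)"
      unfolding c_def \<eta>_def by (rule arith_bound[OF assms(1) T1 B0])
    finally show ?thesis unfolding \<eta>_def .
  qed
qed


end
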